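(* Let $\gamma\in\mathbb{R}$ and $\epsilon_{\text{abs}}>0$, and let $\hat g_{-,\gamma}\in\arg\min_{f\in\mathcal{F}}\hat h_{-,\gamma}(f)$. If $\hat h_{-,\gamma}(\hat g_{-,\gamma})\ge0$, then $$\frac{\hat h_{-,\gamma}(\hat g_{-,\gamma})}{\epsilon_{\text{abs}}}-\gamma\le\widehat{MR}(f)$$ for all $f\in\mathcal{F}$ with $\hat e_{\text{orig}}(f)\le\epsilon_{\text{abs}}$; moreover $-\gamma\le\widehat{MR}(f)$ for all $f\in\mathcal{F}$. Additionally, if $\hat h_{-,\gamma}(\hat g_{-,\gamma})\ge0$ and $\hat e_{\text{orig}}(\hat g_{-,\gamma})\le\epsilon_{\text{abs}}$ with at least one of these two inequalities holding with equality, then the displayed inequality holds with equality for $f=\hat g_{-,\gamma}$.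
   Context: Setting: $\mathcal{F}$ a set of prediction models, $L\ge0$ a loss, and a fixed observed sample $(\mathbf{y}_{[i]},\mathbf{X}_{1[i]},\mathbf{X}_{2[i]})$, $i=1,\dots,n$, $n\ge2$. $\hat e_{\text{orig}}(f)=\frac1n\sum_iL\{f,(\mathbf{y}_{[i]},\mathbf{X}_{1[i]},\mathbf{X}_{2[i]})\}$; $\hat e_{\text{switch}}(f)=\frac1{n(n-1)}\sum_i\sum_{j\ne i}L\{f,(\mathbf{y}_{[j]},\mathbf{X}_{1[i]},\mathbf{X}_{2[j]})\}$; $\widehat{MR}(f)=\hat e_{\text{switch}}(f)/\hat e_{\text{orig}}(f)$. For $\gamma\in\mathbb{R}$, $\hat h_{-,\gamma}(f):=\gamma\hat e_{\text{orig}}(f)+\hat e_{\text{switch}}(f)$. Standing assumptions: $\min_{f\in\mathcal{F}}\hat e_{\text{orig}}(f)>0$ and minimizers of $\hat h_{-,\gamma}$ over $\mathcal{F}$ exist. *)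

theory Defs
  imports "HOL-Analysis.Analysis"
begin

definition e_orig ::
  "('f \<Rightarrow> ('y \<times> 'a \<times> 'b) \<Rightarrow> real) \<Rightarrow> nat \<Rightarrow> (nat \<Rightarrow> 'y) \<Rightarrow> (nat \<Rightarrow> 'a) \<Rightarrow> (nat \<Rightarrow> 'b) \<Rightarrow> 'f \<Rightarrow> real"
  where "e_orig L n y X1 X2 f = (1 / real n) * (\<Sum>i<n. L f (y i, X1 i, X2 i))"

definition e_switch ::
  "('f \<Rightarrow> ('y \<times> 'a \<times> 'b) \<Rightarrow> real) \<Rightarrow> nat \<Rightarrow> (nat \<Rightarrow> 'y) \<Rightarrow> (nat \<Rightarrow> 'a) \<Rightarrow> (nat \<Rightarrow> 'b) \<Rightarrow> 'f \<Rightarrow> real"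
  where "e_switch L n y X1 X2 f =
    (1 / (real n * (real n - 1))) * (\<Sum>i<n. \<Sum>j\<in>{..<n} - {i}. L f (y j, X1 i, X2 j))"

definition MR_hat ::
  "('f \<Rightarrow> ('y \<times> 'a \<times> 'b) \<Rightarrow> real) \<Rightarrow> nat \<Rightarrow> (nat \<Rightarrow> 'y) \<Rightarrow> (nat \<Rightarrow> 'a) \<Rightarrow> (nat \<Rightarrow> 'b) \<Rightarrow> 'f \<Rightarrow> real"
  where "MR_hat L n y X1 X2 f = e_switch L n y X1 X2 f / e_orig L n y X1 X2 f"

definition h_minus ::
  "real \<Rightarrow> ('f \<Rightarrow> ('y \<times> 'a \<times> 'b) \<Rightarrow> real) \<Rightarrow> nat \<Rightarrow> (nat \<Rightarrow> 'y) \<Rightarrow> (nat \<Rightarrow> 'a) \<Rightarrow> (nat \<Rightarrow> 'b) \<Rightarrow> 'f \<Rightarrow> real"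
  where "h_minus \<gamma> L n y X1 X2 f = \<gamma> * e_orig L n y X1 X2 f + e_switch L n y X1 X2 f"

end

theory Submission
  imports Defs
begin

theorem lemma14:
  fixes F :: "'f set" and L :: "'f \<Rightarrow> ('y \<times> 'a \<times> 'b) \<Rightarrow> real"
    and n :: nat and y :: "nat \<Rightarrow> 'y" and X1 :: "nat \<Rightarrow> 'a" and X2 :: "nat \<Rightarrow> 'b"
    and \<gamma> \<epsilon>_abs :: real and g :: 'f
  assumes n2: "n \<ge> 2"
    and L_nonneg: "\<And>f z. L f z \<ge> 0"
    and min_orig: "\<exists>f0\<in>F. (\<forall>f\<in>F. e_orig L n y X1 X2 f0 \<le> e_orig L n y X1 X2 f)
                        \<and> e_orig L n y X1 X2 f0 > 0"
    and eps_pos: "\<epsilon>_abs > 0"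
    and g_in: "g \<in> F"
    and g_min: "\<forall>f\<in>F. h_minus \<gamma> L n y X1 X2 g \<le> h_minus \<gamma> L n y X1 X2 f"
  shows "(h_minus \<gamma> L n y X1 X2 g \<ge> 0 \<longrightarrow>
           (\<forall>f\<in>F. e_orig L n y X1 X2 f \<le> \<epsilon>_abs \<longrightarrow>
              h_minus \<gamma> L n y X1 X2 g / \<epsilon>_abs - \<gamma> \<le> MR_hat L n y X1 X2 f)
           \<and> (\<forall>f\<in>F. - \<gamma> \<le> MR_hat L n y X1 X2 f))
       \<and> ((h_minus \<gamma> L n y X1 X2 g \<ge> 0 \<and> e_orig L n y X1 X2 g \<le> \<epsilon>_abs
            \<and> (h_minus \<gamma> L n y X1 X2 g = 0 \<or> e_orig L n y X1 X2 g = \<epsilon>_abs))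
          \<longrightarrow> h_minus \<gamma> L n y X1 X2 g / \<epsilon>_abs - \<gamma> = MR_hat L n y X1 X2 g)"
proof -
  let ?eo = "e_orig L n y X1 X2" and ?es = "e_switch L n y X1 X2" and ?h = "h_minus \<gamma> L n y X1 X2"
  have pos: "\<And>f. f \<in> F \<Longrightarrow> ?eo f > 0" using min_orig by force
  have hdef: "\<And>f. ?h f = \<gamma> * ?eo f + ?es f" by (simp add: h_minus_def)
  have mr: "\<And>f. f \<in> F \<Longrightarrow> MR_hat L n y X1 X2 f = ?h f / ?eo f - \<gamma>"
  proof -
    fix f assume "f \<in> F" then have p: "?eo f > 0" by (rule pos)
    show "MR_hat L n y X1 X2 f = ?h f / ?eo f - \<gamma>"
      unfolding MR_hat_def hdef using p by (simp add: field_simps)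
  qed
  have A: "?h g \<ge> 0 \<Longrightarrow> f \<in> F \<Longrightarrow> ?eo f \<le> \<epsilon>_abs \<Longrightarrow>
              ?h g / \<epsilon>_abs - \<gamma> \<le> MR_hat L n y X1 X2 f" for f
  proof -
    assume h0: "?h g \<ge> 0" and f: "f \<in> F" and le: "?eo f \<le> \<epsilon>_abs"
    have p: "?eo f > 0" using pos f by blast
    have "?h g / \<epsilon>_abs \<le> ?h g / ?eo f" using h0 p le by (simp add: frac_le)
    also have "\<dots> \<le> ?h f / ?eo f" using g_min f p by (simp add: divide_right_mono)
    finally show ?thesis using mr[OF f] by simp
  qed
  have B: "?h g \<ge> 0 \<Longrightarrow> f \<in> F \<Longrightarrow> - \<gamma> \<le> MR_hat L n y X1 X2 f" for f
  proof -
    assume h0: "?h g \<ge> 0" and f: "f \<in> F"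
    have p: "?eo f > 0" using pos f by blast
    have "?h f \<ge> 0" using g_min f h0 by force
    then have "?h f / ?eo f \<ge> 0" using p by simp
    then show ?thesis using mr[OF f] by simp
  qed
  have C: "?h g / \<epsilon>_abs - \<gamma> = MR_hat L n y X1 X2 g"
    if "?h g = 0 \<or> ?eo g = \<epsilon>_abs"
    using that mr[OF g_in] by auto
  show ?thesis using A B C by blast
qed

end
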